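(* For every $t_*>0$ there exist constants $\alpha>0$, $\delta_L>0$ such that every solution $f$ of $\partial_t f+v\cdot\nabla_x f=\big(\int_{\mathbb{R}^d}f(t,x,u)\,\mathrm{d}u\big)\mathcal{M}(v)-f$ on $\mathbb{T}^d\times\mathbb{R}^d$ with initial datum $f_0\in\mathcal{P}(\mathbb{T}^d\times\mathbb{R}^d)$ satisfies \[f(t_*,x,v)\ge\alpha\,\mathbb{1}_{\{|v|\le\delta_L\}}\] in the sense of measures on $\mathbb{T}^d\times\mathbb{R}^d$.
   Context: $\mathbb{T}^d$ is the unit flat torus, $\mathcal{M}(v)=(2\pi)^{-d/2}e^{-|v|^2/2}$, solutions are measure-valued solutions given by the associated Markov semigroup, and the right-hand side $\alpha\mathbb{1}_{\{|v|\le\delta_L\}}$ denotes $\alpha$ times Lebesgue measure on $\mathbb{T}^d\times\{|v|\le\delta_L\}$. *)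

theory Defs
  imports "HOL-Probability.Probability"
begin

text \<open>The unit flat torus T^d is represented by the fundamental domain [0,1)^d,
  with wrap-around map given by taking fractional parts componentwise.\<close>

definition torus :: "(real^'d) set" where
  "torus = {x. \<forall>i. 0 \<le> x $ i \<and> x $ i < 1}"

definition wrap :: "real^'d \<Rightarrow> real^'d" where
  "wrap x = (\<chi> i. frac (x $ i))"

definition flow :: "real \<Rightarrow> ((real^'d) \<times> (real^'d)) \<Rightarrow> ((real^'d) \<times> (real^'d))" where
  "flow t z = (wrap (fst z + t *\<^sub>R snd z), snd z)"

definition maxwellian :: "real^'d \<Rightarrow> real" where
  "maxwellian v = (2 * pi) powr (- real CARD('d) / 2) * exp (- (norm v)\<^sup>2 / 2)"

text \<open>Measure-valued (mild / Duhamel) solution of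
  d_t f + v . grad_x f = (int f du) M(v) - f  on T^d x R^d,
  i.e. f_t = e^{-t} (S_t)_# f_0 + int_0^t e^{-(t-s)} (S_{t-s})_# (rho_s (x) M) ds,
  where S is the free transport flow and rho_s the x-marginal of f_s.
  This is the solution given by the associated Markov semigroup.\<close>
definition kinetic_solution :: "(real \<Rightarrow> ((real^'d) \<times> (real^'d)) measure) \<Rightarrow> bool" where
  "kinetic_solution f \<longleftrightarrow>
     (\<forall>t\<ge>0. sets (f t) = sets borel \<and> prob_space (f t)) \<and>
     emeasure (f 0) (- (torus \<times> UNIV)) = 0 \<and>
     (\<forall>t\<ge>0. \<forall>A\<in>sets borel.
        emeasure (f t) A =
          ennreal (exp (- t)) * emeasure (f 0) (flow t -` A)
          + (\<integral>\<^sup>+ s\<in>{0..t}. ennreal (exp (- (t - s))) *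
               (\<integral>\<^sup>+ z. (\<integral>\<^sup>+ v. ennreal (maxwellian v) *
                   indicator A (flow (t - s) (fst z, v)) \<partial>lborel) \<partial>(f s)) \<partial>lborel))"

end

theory Submission
  imports Defs
begin

lemma wrap_nth[simp]: "wrap x $ i = frac (x $ i)"
  by (simp add: wrap_def)

lemma wrap_in_torus: "wrap x \<in> torus"
  by (simp add: torus_def frac_lt_1)

lemma wrap_torus: "x \<in> torus \<Longrightarrow> wrap x = x"
  by (simp add: torus_def wrap_def frac_eq vec_eq_iff)

lemma frac_frac_add: "frac (frac a + b) = frac (a + b)"
proof -
  have "frac a + b = (a + b) + of_int (- \<lfloor>a\<rfloor>)" by (simp add: frac_def)
  then show ?thesis by (metis frac_add_of_int_right)
qed

lemma wrap_wrap_add: "wrap (wrap x + y) = wrap (x + y)"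
  by (simp add: wrap_def frac_frac_add)

lemma norm_torus: "x \<in> torus \<Longrightarrow> norm x \<le> real CARD('d)" for x :: "real^'d"
proof -
  assume "x \<in> torus"
  then have "\<And>i. \<bar>x$i\<bar> \<le> 1" unfolding torus_def by (metis (mono_tags) abs_of_nonneg less_imp_le mem_Collect_eq)
  then have "sum (\<lambda>i. \<bar>x$i\<bar>) UNIV \<le> sum (\<lambda>i. 1) (UNIV::'d set)" by (intro sum_mono) auto
  then show ?thesis using norm_le_l1_cart[of x] by simp
qed

lemma measurable_frac[measurable]: "(frac :: real \<Rightarrow> real) \<in> borel_measurable borel"
  unfolding frac_def[abs_def] using borel_measurable_real_floor by measurable

lemma measurable_wrap[measurable]: "(wrap :: real^'d \<Rightarrow> real^'d) \<in> borel_measurable borel"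
proof (subst borel_measurable_euclidean_space, intro ballI)
  fix b :: "real^'d" assume "b \<in> Basis"
  then obtain i where b: "b = axis i 1" by (auto simp: Basis_vec_def)
  have "(\<lambda>x::real^'d. wrap x \<bullet> b) = (\<lambda>x. frac (x $ i))"
    by (simp add: b cart_eq_inner_axis[symmetric])
  moreover have "(\<lambda>x::real^'d. x $ i) \<in> borel_measurable borel"
    by (simp add: cart_eq_inner_axis)
  ultimately show "(\<lambda>x::real^'d. wrap x \<bullet> b) \<in> borel_measurable borel"
    by (simp add: measurable_compose[OF _ measurable_frac])
qed

lemma torus_sets[measurable]: "(torus :: (real^'d) set) \<in> sets borel"
proof -
  have "torus = (\<Inter>i. {x::real^'d. 0 \<le> x$i \<and> x$i < 1})" by (auto simp: torus_def)
  moreover have "\<And>i. {x::real^'d. 0 \<le> x$i \<and> x$i < 1} \<in> sets borel"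
  proof -
    fix i :: 'd
    have [measurable]: "(\<lambda>x::real^'d. x $ i) \<in> borel_measurable borel"
      by (simp add: cart_eq_inner_axis)
    show "{x::real^'d. 0 \<le> x$i \<and> x$i < 1} \<in> sets borel" by measurable
  qed
  then have "(\<Inter>i\<in>UNIV. {x::real^'d. 0 \<le> x$i \<and> x$i < 1}) \<in> sets borel"
    by (intro sets.finite_INT) auto
  ultimately show ?thesis by simp
qed

lemma measurable_flow[measurable]: "flow t \<in> borel_measurable borel"
proof -
  have c: "(\<lambda>z::(real^'d)\<times>(real^'d). fst z + t *\<^sub>R snd z) \<in> borel_measurable borel"
    by (intro borel_measurable_continuous_onI continuous_intros)
  have "(\<lambda>z::(real^'d)\<times>(real^'d). (wrap (fst z + t *\<^sub>R snd z), snd z)) \<in> borel \<rightarrow>\<^sub>M (borel \<Otimes>\<^sub>M borel)"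
  proof (rule measurable_Pair)
    show "(\<lambda>z::(real^'d)\<times>(real^'d). wrap (fst z + t *\<^sub>R snd z)) \<in> borel_measurable borel"
      using measurable_compose[OF c measurable_wrap] by (simp add: o_def)
    show "(\<lambda>z::(real^'d)\<times>(real^'d). snd z) \<in> borel_measurable borel"
      by (intro borel_measurable_continuous_onI continuous_intros)
  qed
  then show ?thesis unfolding flow_def[abs_def] borel_prod .
qed

lemma measurable_maxwellian[measurable]: "maxwellian \<in> borel_measurable borel"
  unfolding maxwellian_def[abs_def] by measurable

lemma maxwellian_lb:
  fixes v :: "real^'d"
  assumes "norm v \<le> R"
  shows "(2 * pi) powr (- real CARD('d) / 2) * exp (- R\<^sup>2 / 2) \<le> maxwellian v"
proof -
  have "(norm v)\<^sup>2 \<le> R\<^sup>2" using assms by (intro power_mono) auto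
  then show ?thesis unfolding maxwellian_def by (intro mult_left_mono) auto
qed

lemma affine_nn:
  fixes g :: "real^'d \<Rightarrow> ennreal"
  assumes g: "g \<in> borel_measurable borel" and c: "c > 0"
  shows "(\<integral>\<^sup>+ v. g (a + c *\<^sub>R v) \<partial>lborel) = ennreal (1 / c ^ CARD('d)) * (\<integral>\<^sup>+ u. g u \<partial>lborel)"
proof -
  have "(\<integral>\<^sup>+ u. g u \<partial>lborel) = (\<integral>\<^sup>+ u. g u \<partial>density (distr lborel borel (\<lambda>x. a + c *\<^sub>R x)) (\<lambda>_. \<bar>c\<bar>^DIM(real^'d)))"
  proof -
    have E: "lborel = density (distr lborel borel (\<lambda>x::real^'d. a + c *\<^sub>R x)) (\<lambda>_. \<bar>c\<bar>^DIM(real^'d))"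
      by (rule lborel_affine) (use c in simp)
    show ?thesis by (rule arg_cong[where f="\<lambda>M. nn_integral M g", OF E])
  qed
  also have "\<dots> = (\<integral>\<^sup>+ v. ennreal (c ^ CARD('d)) * g (a + c *\<^sub>R v) \<partial>lborel)"
  proof -
    have "(\<lambda>v::real^'d. a + c *\<^sub>R v) \<in> borel_measurable borel"
      by (intro borel_measurable_continuous_onI continuous_intros)
    then show ?thesis using c g by (simp add: nn_integral_density nn_integral_distr)
  qed
  also have "\<dots> = ennreal (c ^ CARD('d)) * (\<integral>\<^sup>+ v. g (a + c *\<^sub>R v) \<partial>lborel)"
  proof (intro nn_integral_cmult)
    have "(\<lambda>v::real^'d. a + c *\<^sub>R v) \<in> borel_measurable borel"
      by (intro borel_measurable_continuous_onI continuous_intros)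
    then show "(\<lambda>v. g (a + c *\<^sub>R v)) \<in> borel_measurable lborel"
      using g by (simp add: measurable_compose)
  qed
  finally have "(\<integral>\<^sup>+ u. g u \<partial>lborel) = ennreal (c ^ CARD('d)) * (\<integral>\<^sup>+ v. g (a + c *\<^sub>R v) \<partial>lborel)" .
  then have "ennreal (1 / c ^ CARD('d)) * (\<integral>\<^sup>+ u. g u \<partial>lborel) = ennreal (1 / c ^ CARD('d)) * ennreal (c ^ CARD('d)) * (\<integral>\<^sup>+ v. g (a + c *\<^sub>R v) \<partial>lborel)"
    by (simp add: mult.assoc)
  also have "ennreal (1 / c ^ CARD('d)) * ennreal (c ^ CARD('d)) = 1"
    using c by (simp add: ennreal_mult'[symmetric])
  finally show ?thesis by simp
qed


definition mwb :: "nat \<Rightarrow> real \<Rightarrow> real" where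
  "mwb n R = (2 * pi) powr (- real n / 2) * exp (- R\<^sup>2 / 2)"

lemma mwb_pos: "mwb n R > 0" by (simp add: mwb_def)

lemma avg_lb:
  fixes x :: "real^'d" and g :: "real^'d \<Rightarrow> ennreal"
  assumes g: "g \<in> borel_measurable borel" and s: "\<sigma> > 0"
    and R: "(real CARD('d) + RQ) / \<sigma> \<le> R"
  shows "ennreal (mwb CARD('d) R / \<sigma> ^ CARD('d)) * (\<integral>\<^sup>+u. indicator (cball 0 RQ) u * g (wrap u) \<partial>lborel)
     \<le> (\<integral>\<^sup>+v. ennreal (maxwellian v) * g (wrap (x + \<sigma> *\<^sub>R v)) \<partial>lborel)"
proof -
  define x0 where "x0 = wrap x"
  define G where "G u = indicator (cball 0 RQ) u * g (wrap u)" for u :: "real^'d"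
  have [measurable]: "cball (0::real^'d) RQ \<in> sets borel" by (simp add: borel_closed)
  have gw[measurable]: "(\<lambda>u. g (wrap u)) \<in> borel_measurable borel"
    using measurable_compose[OF measurable_wrap g] by (simp add: o_def)
  have Gm: "G \<in> borel_measurable borel" unfolding G_def[abs_def] by measurable
  have aff: "(\<lambda>v::real^'d. x0 + \<sigma> *\<^sub>R v) \<in> borel_measurable borel"
    by (intro borel_measurable_continuous_onI continuous_intros)
  have "(\<integral>\<^sup>+v. ennreal (mwb CARD('d) R) * G (x0 + \<sigma> *\<^sub>R v) \<partial>lborel)
      \<le> (\<integral>\<^sup>+v. ennreal (maxwellian v) * g (wrap (x + \<sigma> *\<^sub>R v)) \<partial>lborel)"
  proof (rule nn_integral_mono)
    fix v :: "real^'d"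
    have w: "wrap (x + \<sigma> *\<^sub>R v) = wrap (x0 + \<sigma> *\<^sub>R v)"
      by (simp add: x0_def wrap_wrap_add)
    show "ennreal (mwb CARD('d) R) * G (x0 + \<sigma> *\<^sub>R v) \<le> ennreal (maxwellian v) * g (wrap (x + \<sigma> *\<^sub>R v))"
    proof (cases "x0 + \<sigma> *\<^sub>R v \<in> cball 0 RQ")
      case True
      have "norm (\<sigma> *\<^sub>R v) \<le> norm (x0 + \<sigma> *\<^sub>R v) + norm x0"
        by (metis add_diff_cancel_left' norm_triangle_ineq4 add.commute)
      also have "\<dots> \<le> RQ + real CARD('d)"
        using True norm_torus[OF wrap_in_torus[of x]] by (simp add: x0_def)
      finally have "\<sigma> * norm v \<le> real CARD('d) + RQ" using s by simp
      then have "norm v \<le> (real CARD('d) + RQ) / \<sigma>" using s by (simp add: field_simps)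
      with R have "norm v \<le> R" by linarith
      then have "mwb CARD('d) R \<le> maxwellian v" unfolding mwb_def by (rule maxwellian_lb)
      then show ?thesis using True w
        by (auto simp: G_def intro!: mult_right_mono ennreal_leI)
    next
      case False
      then show ?thesis by (simp add: G_def)
    qed
  qed
  moreover have "(\<integral>\<^sup>+v. ennreal (mwb CARD('d) R) * G (x0 + \<sigma> *\<^sub>R v) \<partial>lborel)
      = ennreal (mwb CARD('d) R) * (ennreal (1 / \<sigma> ^ CARD('d)) * (\<integral>\<^sup>+u. G u \<partial>lborel))"
    using Gm aff s by (simp add: nn_integral_cmult measurable_compose[OF aff Gm] affine_nn)
  moreover have "ennreal (mwb CARD('d) R / \<sigma> ^ CARD('d)) = ennreal (mwb CARD('d) R) * ennreal (1 / \<sigma> ^ CARD('d))"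
    using s mwb_pos[of "CARD('d)" R] by (simp add: ennreal_mult[symmetric])
  ultimately show ?thesis by (simp add: G_def mult.assoc)
qed


lemma prod_measurable_lborel: "(f :: ('a::euclidean_space \<times> 'b::euclidean_space) \<Rightarrow> ennreal) \<in> borel_measurable borel \<Longrightarrow> case_prod (\<lambda>x y. f (x, y)) \<in> borel_measurable (lborel \<Otimes>\<^sub>M lborel)"
  by (simp add: lborel_prod)

lemma final_lb:
  fixes A :: "((real^'d) \<times> (real^'d)) set"
  assumes A[measurable]: "A \<in> sets borel" and tau: "0 \<le> \<tau>" "\<tau> \<le> T"
  shows "ennreal (mwb CARD('d) 1) * emeasure lborel (A \<inter> (torus \<times> cball 0 1))
    \<le> (\<integral>\<^sup>+u. indicator (cball 0 (real CARD('d) + T)) u *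
          (\<integral>\<^sup>+v. ennreal (maxwellian v) * indicator A (flow \<tau> (wrap u, v)) \<partial>lborel) \<partial>lborel)"
proof -
  define Q where "Q = cball (0::real^'d) (real CARD('d) + T)"
  define B where "B = A \<inter> (torus \<times> cball (0::real^'d) 1)"
  define mw where "mw = mwb CARD('d) 1"
  have [measurable]: "Q \<in> sets borel" by (simp add: Q_def borel_closed)
  have Bm[measurable]: "B \<in> sets borel"
  proof -
    have "torus \<times> cball (0::real^'d) 1 \<in> sets (borel \<Otimes>\<^sub>M borel)"
      by (rule pair_measureI) (simp_all add: borel_closed)
    then have "torus \<times> cball (0::real^'d) 1 \<in> sets borel" by (simp only: borel_prod)
    then show ?thesis unfolding B_def using A by auto
  qed
  define F where "F z = indicator Q (fst z) * (ennreal (maxwellian (snd z)) * indicator A (flow \<tau> (wrap (fst z), snd z)))"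
    for z :: "(real^'d) \<times> (real^'d)"
  have Em: "(\<lambda>z::(real^'d)\<times>(real^'d). flow \<tau> (wrap (fst z), snd z)) \<in> borel_measurable borel"
  proof -
    have w: "(\<lambda>z::(real^'d)\<times>(real^'d). wrap (fst z)) \<in> borel_measurable borel"
    proof -
      have "(fst :: (real^'d)\<times>(real^'d) \<Rightarrow> real^'d) \<in> borel_measurable borel"
        by (intro borel_measurable_continuous_onI continuous_intros)
      from measurable_compose[OF this measurable_wrap] show ?thesis by (simp add: o_def)
    qed
    have s: "(\<lambda>z::(real^'d)\<times>(real^'d). snd z) \<in> borel_measurable borel"
      by (intro borel_measurable_continuous_onI continuous_intros)
    have "(\<lambda>z::(real^'d)\<times>(real^'d). (wrap (fst z), snd z)) \<in> borel \<rightarrow>\<^sub>M (borel \<Otimes>\<^sub>M borel)"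
      by (rule measurable_Pair[OF w s])
    then have "(\<lambda>z::(real^'d)\<times>(real^'d). (wrap (fst z), snd z)) \<in> borel_measurable borel"
      by (simp add: borel_prod)
    from measurable_compose[OF this measurable_flow] show ?thesis by (simp add: o_def)
  qed
  have Fm: "F \<in> borel_measurable borel"
  proof -
    have f: "(\<lambda>z::(real^'d)\<times>(real^'d). fst z) \<in> borel_measurable borel"
      by (intro borel_measurable_continuous_onI continuous_intros)
    have s: "(\<lambda>z::(real^'d)\<times>(real^'d). snd z) \<in> borel_measurable borel"
      by (intro borel_measurable_continuous_onI continuous_intros)
    have [measurable]: "(\<lambda>z::(real^'d)\<times>(real^'d). indicator Q (fst z) :: ennreal) \<in> borel_measurable borel"
      using measurable_compose[OF f borel_measurable_indicator[of Q borel]] by (simp add: o_def)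
    have [measurable]: "(\<lambda>z::(real^'d)\<times>(real^'d). ennreal (maxwellian (snd z))) \<in> borel_measurable borel"
      using measurable_compose[OF s measurable_maxwellian] by (simp add: o_def)
    have [measurable]: "(\<lambda>z::(real^'d)\<times>(real^'d). indicator A (flow \<tau> (wrap (fst z), snd z)) :: ennreal) \<in> borel_measurable borel"
      using measurable_compose[OF Em borel_measurable_indicator[of A borel]] by (simp add: o_def)
    show ?thesis unfolding F_def[abs_def] by measurable
  qed
  have "(\<integral>\<^sup>+u. indicator Q u * (\<integral>\<^sup>+v. ennreal (maxwellian v) * indicator A (flow \<tau> (wrap u, v)) \<partial>lborel) \<partial>lborel)
      = (\<integral>\<^sup>+u. (\<integral>\<^sup>+v. F (u, v) \<partial>lborel) \<partial>lborel)"
  proof (rule nn_integral_cong)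
    fix u :: "real^'d"
    show "indicator Q u * (\<integral>\<^sup>+v. ennreal (maxwellian v) * indicator A (flow \<tau> (wrap u, v)) \<partial>lborel) = (\<integral>\<^sup>+v. F (u, v) \<partial>lborel)"
    proof -
      have p: "(\<lambda>v::real^'d. (u, v)) \<in> borel_measurable borel"
        by (intro borel_measurable_continuous_onI continuous_intros)
      have [measurable]: "(\<lambda>v::real^'d. indicator A (flow \<tau> (wrap u, v)) :: ennreal) \<in> borel_measurable borel"
        using measurable_compose[OF measurable_compose[OF p Em] borel_measurable_indicator[of A borel]] by (simp add: o_def)
      have "(\<lambda>v. ennreal (maxwellian v) * indicator A (flow \<tau> (wrap u, v))) \<in> borel_measurable lborel"
        by measurable
      then show ?thesis by (simp add: F_def nn_integral_cmult[symmetric])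
    qed
  qed
  also have "\<dots> = (\<integral>\<^sup>+v. (\<integral>\<^sup>+u. F (u, v) \<partial>lborel) \<partial>lborel)"
    using lborel_pair.Fubini'[OF prod_measurable_lborel[OF Fm]] by simp
  finally have eq1: "(\<integral>\<^sup>+u. indicator Q u * (\<integral>\<^sup>+v. ennreal (maxwellian v) * indicator A (flow \<tau> (wrap u, v)) \<partial>lborel) \<partial>lborel)
      = (\<integral>\<^sup>+v. (\<integral>\<^sup>+u. F (u, v) \<partial>lborel) \<partial>lborel)" .
  have Bm2: "B \<in> sets (lborel \<Otimes>\<^sub>M lborel)" unfolding lborel_prod by simp
  have "(\<integral>\<^sup>+v. (\<integral>\<^sup>+u. ennreal mw * indicator B (u + \<tau> *\<^sub>R v, v) \<partial>lborel) \<partial>lborel)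
      \<le> (\<integral>\<^sup>+v. (\<integral>\<^sup>+u. F (u, v) \<partial>lborel) \<partial>lborel)"
  proof (intro nn_integral_mono)
    fix u v :: "real^'d"
    show "ennreal mw * indicator B (u + \<tau> *\<^sub>R v, v) \<le> F (u, v)"
    proof (cases "(u + \<tau> *\<^sub>R v, v) \<in> B")
      case True
      then have inA: "(u + \<tau> *\<^sub>R v, v) \<in> A" and inT: "u + \<tau> *\<^sub>R v \<in> torus" and nv: "norm v \<le> 1"
        by (auto simp: B_def)
      have fl: "flow \<tau> (wrap u, v) = (u + \<tau> *\<^sub>R v, v)"
        by (simp add: flow_def wrap_wrap_add wrap_torus[OF inT])
      have "norm u \<le> norm (u + \<tau> *\<^sub>R v) + norm (\<tau> *\<^sub>R v)"
        by (metis add_diff_cancel_right' norm_triangle_ineq4)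
      also have "\<dots> \<le> real CARD('d) + T"
      proof -
        have "norm (\<tau> *\<^sub>R v) = \<tau> * norm v" using tau by simp
        also have "\<dots> \<le> T" using tau nv by (metis mult_right_le_one_le norm_ge_zero order_trans)
        finally show ?thesis using norm_torus[OF inT] by linarith
      qed
      finally have uQ: "u \<in> Q" by (simp add: Q_def)
      have "mw \<le> maxwellian v" unfolding mw_def mwb_def using nv by (rule maxwellian_lb)
      then show ?thesis using True inA uQ by (simp add: F_def fl ennreal_leI)
    next
      case False
      then show ?thesis by simp
    qed
  qed
  also note eq1[symmetric]
  finally have le1: "(\<integral>\<^sup>+v. (\<integral>\<^sup>+u. ennreal mw * indicator B (u + \<tau> *\<^sub>R v, v) \<partial>lborel) \<partial>lborel) \<le> 
     (\<integral>\<^sup>+u. indicator Q u * (\<integral>\<^sup>+v. ennreal (maxwellian v) * indicator A (flow \<tau> (wrap u, v)) \<partial>lborel) \<partial>lborel)" .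
  have "(\<integral>\<^sup>+v. (\<integral>\<^sup>+u. ennreal mw * indicator B (u + \<tau> *\<^sub>R v, v) \<partial>lborel) \<partial>lborel)
     = (\<integral>\<^sup>+v. (\<integral>\<^sup>+y. ennreal mw * indicator B (y, v) \<partial>lborel) \<partial>lborel)"
  proof (rule nn_integral_cong)
    fix v :: "real^'d"
    have p: "(\<lambda>y::real^'d. (y, v)) \<in> borel_measurable borel"
      by (intro borel_measurable_continuous_onI continuous_intros)
    have gm: "(\<lambda>y::real^'d. ennreal mw * indicator B (y, v)) \<in> borel_measurable borel"
      using measurable_compose[OF p borel_measurable_indicator[OF Bm]] by (simp add: o_def)
    have "(\<integral>\<^sup>+u. ennreal mw * indicator B (\<tau> *\<^sub>R v + 1 *\<^sub>R u, v) \<partial>lborel) = 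
        ennreal (1 / 1 ^ CARD('d)) * (\<integral>\<^sup>+y. ennreal mw * indicator B (y, v) \<partial>lborel)"
      using affine_nn[OF gm, of 1 "\<tau> *\<^sub>R v"] by simp
    then show "(\<integral>\<^sup>+u. ennreal mw * indicator B (u + \<tau> *\<^sub>R v, v) \<partial>lborel) = (\<integral>\<^sup>+y. ennreal mw * indicator B (y, v) \<partial>lborel)"
      by (simp add: add.commute)
  qed
  also have "\<dots> = integral\<^sup>N (lborel \<Otimes>\<^sub>M lborel) (\<lambda>z. ennreal mw * indicator B z)"
    by (rule lborel_pair.nn_integral_snd) (simp add: lborel_prod)
  also have "\<dots> = ennreal mw * emeasure lborel B"
    using Bm2 by (simp add: nn_integral_cmult_indicator lborel_prod)
  finally show ?thesis using le1 by (simp add: B_def mw_def Q_def)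
qed


lemma ks_prob: "kinetic_solution f \<Longrightarrow> t \<ge> 0 \<Longrightarrow> prob_space (f t)"
  unfolding kinetic_solution_def by blast

lemma ks_sets: "kinetic_solution f \<Longrightarrow> t \<ge> 0 \<Longrightarrow> sets (f t) = sets borel"
  unfolding kinetic_solution_def by blast

lemma ks_eq:
  assumes k: "kinetic_solution f" and t: "t \<ge> 0" and A: "A \<in> sets borel"
  shows "emeasure (f t) A =
          ennreal (exp (- t)) * emeasure (f 0) (flow t -` A)
          + (\<integral>\<^sup>+ s\<in>{0..t}. ennreal (exp (- (t - s))) *
               (\<integral>\<^sup>+ z. (\<integral>\<^sup>+ v. ennreal (maxwellian v) *
                   indicator A (flow (t - s) (fst z, v)) \<partial>lborel) \<partial>(f s)) \<partial>lborel)"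
proof -
  have "\<forall>t\<ge>0. \<forall>A\<in>sets borel.
        emeasure (f t) A =
          ennreal (exp (- t)) * emeasure (f 0) (flow t -` A)
          + (\<integral>\<^sup>+ s\<in>{0..t}. ennreal (exp (- (t - s))) *
               (\<integral>\<^sup>+ z. (\<integral>\<^sup>+ v. ennreal (maxwellian v) *
                   indicator A (flow (t - s) (fst z, v)) \<partial>lborel) \<partial>(f s)) \<partial>lborel)"
    using k unfolding kinetic_solution_def by (elim conjE)
  then show ?thesis using t A by blast
qed


definition cst :: "nat \<Rightarrow> real \<Rightarrow> real" where
  "cst n t = (t / 4) * (exp (- t) * (mwb n ((real n + (real n + t)) / (t / 4)) / t ^ n))"

lemma cst_pos: "t > 0 \<Longrightarrow> cst n t > 0"
  by (simp add: cst_def mwb_pos)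

lemma measurable_fst_borel: "(fst :: ('a::euclidean_space \<times> 'b::euclidean_space) \<Rightarrow> 'a) \<in> borel_measurable borel"
  by (intro borel_measurable_continuous_onI continuous_intros)

lemma cyl_lb:
  fixes f :: "real \<Rightarrow> ((real^'d) \<times> (real^'d)) measure" and C :: "(real^'d) set"
  assumes f: "kinetic_solution f" and t: "t > 0" and s: "t / 2 \<le> s" "s \<le> t"
    and C[measurable]: "C \<in> sets borel"
  shows "ennreal (cst CARD('d) t) * (\<integral>\<^sup>+u. indicator (cball 0 (real CARD('d) + t)) u * indicator C (wrap u) \<partial>lborel)
     \<le> emeasure (f s) (fst -` C)"
proof -
  define n where "n = CARD('d)"
  define Q where "Q = cball (0::real^'d) (real n + t)"
  define R where "R = (real n + (real n + t)) / (t / 4)"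
  define L where "L = (\<integral>\<^sup>+u. indicator Q u * indicator C (wrap u) \<partial>lborel)"
  define k where "k = exp (- t) * (mwb n R / t ^ n)"
  have kpos: "k \<ge> 0" by (simp add: k_def mwb_pos less_imp_le t)
  have A: "fst -` C \<in> sets (borel :: ((real^'d) \<times> (real^'d)) measure)"
    using measurable_sets[OF measurable_fst_borel C] by simp
  have s0: "s \<ge> 0" using s t by linarith
  have eq: "emeasure (f s) (fst -` C) =
          ennreal (exp (- s)) * emeasure (f 0) (flow s -` (fst -` C))
          + (\<integral>\<^sup>+ r\<in>{0..s}. ennreal (exp (- (s - r))) *
               (\<integral>\<^sup>+ z. (\<integral>\<^sup>+ v. ennreal (maxwellian v) *
                   indicator (fst -` C) (flow (s - r) (fst z, v)) \<partial>lborel) \<partial>(f r)) \<partial>lborel)"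
    by (rule ks_eq[OF f s0 A])
  have "(\<integral>\<^sup>+ r. ennreal k * L * indicator {0..t/4} r \<partial>lborel) \<le>
        (\<integral>\<^sup>+ r\<in>{0..s}. ennreal (exp (- (s - r))) *
               (\<integral>\<^sup>+ z. (\<integral>\<^sup>+ v. ennreal (maxwellian v) *
                   indicator (fst -` C) (flow (s - r) (fst z, v)) \<partial>lborel) \<partial>(f r)) \<partial>lborel)"
  proof (rule nn_integral_mono)
    fix r :: real
    show "ennreal k * L * indicator {0..t/4} r \<le> ennreal (exp (- (s - r))) *
               (\<integral>\<^sup>+ z. (\<integral>\<^sup>+ v. ennreal (maxwellian v) *
                   indicator (fst -` C) (flow (s - r) (fst z, v)) \<partial>lborel) \<partial>(f r)) * indicator {0..s} r"
    proof (cases "r \<in> {0..t/4}")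
      case False
      then show ?thesis by simp
    next
      case True
      then have r: "0 \<le> r" "r \<le> t / 4" by auto
      have rs: "r \<in> {0..s}" using r s t by auto
      define \<sigma> where "\<sigma> = s - r"
      have sig: "t / 4 \<le> \<sigma>" "\<sigma> \<le> t" using r s t by (auto simp: \<sigma>_def)
      have sigpos: "\<sigma> > 0" using sig t by linarith
      have Rle: "(real CARD('d) + (real n + t)) / \<sigma> \<le> R"
        unfolding R_def n_def using sig t by (intro divide_left_mono) auto
      have prob: "prob_space (f r)" using ks_prob[OF f r(1)] .
      have inner: "ennreal (mwb n R / \<sigma> ^ n) * L \<le> (\<integral>\<^sup>+ v. ennreal (maxwellian v) *
                   indicator (fst -` C) (flow \<sigma> (x, v)) \<partial>lborel)" for x :: "real^'d"
      proof -
        have "ennreal (mwb CARD('d) R / \<sigma> ^ CARD('d)) * (\<integral>\<^sup>+u. indicator Q u * indicator C (wrap u) \<partial>lborel)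
           \<le> (\<integral>\<^sup>+v. ennreal (maxwellian v) * indicator C (wrap (x + \<sigma> *\<^sub>R v)) \<partial>lborel)"
          unfolding Q_def using avg_lb[of "indicator C" \<sigma> "real n + t" R x] sigpos Rle by simp
        moreover have "\<And>v. indicator (fst -` C) (flow \<sigma> (x, v)) = (indicator C (wrap (x + \<sigma> *\<^sub>R v)) :: ennreal)"
          by (simp add: flow_def indicator_def)
        ultimately show ?thesis by (simp add: L_def n_def)
      qed
      have I2: "ennreal (mwb n R / \<sigma> ^ n) * L \<le> (\<integral>\<^sup>+ z. (\<integral>\<^sup>+ v. ennreal (maxwellian v) *
                   indicator (fst -` C) (flow \<sigma> (fst z, v)) \<partial>lborel) \<partial>(f r))"
      proof -
        have "(\<integral>\<^sup>+ z. ennreal (mwb n R / \<sigma> ^ n) * L \<partial>(f r)) \<le> (\<integral>\<^sup>+ z. (\<integral>\<^sup>+ v. ennreal (maxwellian v) *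
                   indicator (fst -` C) (flow \<sigma> (fst z, v)) \<partial>lborel) \<partial>(f r))"
          by (rule nn_integral_mono) (rule inner)
        moreover have "(\<integral>\<^sup>+ z. ennreal (mwb n R / \<sigma> ^ n) * L \<partial>(f r)) = ennreal (mwb n R / \<sigma> ^ n) * L"
          using prob_space.emeasure_space_1[OF prob] by simp
        ultimately show ?thesis by simp
      qed
      have KL: "ennreal k \<le> ennreal (exp (- (s - r))) * ennreal (mwb n R / \<sigma> ^ n)"
      proof -
        have "mwb n R / t ^ n \<le> mwb n R / \<sigma> ^ n"
          using sig sigpos mwb_pos[of n R] by (intro divide_left_mono power_mono mult_pos_pos zero_less_power) auto
        moreover have "exp (- t) \<le> exp (- (s - r))" using sig by (simp add: \<sigma>_def)
        ultimately have "k \<le> exp (- (s - r)) * (mwb n R / \<sigma> ^ n)"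
          unfolding k_def using mwb_pos[of n R] t by (intro mult_mono) auto
        then show ?thesis using mwb_pos[of n R] sigpos by (simp add: ennreal_mult[symmetric] ennreal_leI)
      qed
      have "ennreal k * L \<le> ennreal (exp (- (s - r))) * (\<integral>\<^sup>+ z. (\<integral>\<^sup>+ v. ennreal (maxwellian v) *
                   indicator (fst -` C) (flow \<sigma> (fst z, v)) \<partial>lborel) \<partial>(f r))"
      proof -
        have "ennreal k * L \<le> ennreal (exp (- (s - r))) * ennreal (mwb n R / \<sigma> ^ n) * L"
          using KL by (rule mult_right_mono) simp
        also have "\<dots> \<le> ennreal (exp (- (s - r))) * (\<integral>\<^sup>+ z. (\<integral>\<^sup>+ v. ennreal (maxwellian v) *
                   indicator (fst -` C) (flow \<sigma> (fst z, v)) \<partial>lborel) \<partial>(f r))"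
          unfolding mult.assoc using I2 by (rule mult_left_mono) simp
        finally show ?thesis .
      qed
      then show ?thesis using True rs by (simp add: \<sigma>_def)
    qed
  qed
  note M1 = this
  have M2: "(\<integral>\<^sup>+ r. ennreal k * L * indicator {0..t/4} r \<partial>lborel) = ennreal k * L * ennreal (t / 4)"
    using t by (simp add: nn_integral_cmult_indicator)
  have M3: "ennreal k * L * ennreal (t / 4) = ennreal (cst CARD('d) t) * L"
  proof -
    have "ennreal (cst CARD('d) t) = ennreal (t / 4) * ennreal k"
      using t kpos by (simp add: cst_def k_def R_def n_def ennreal_mult[symmetric])
    then show ?thesis by (simp add: mult_ac)
  qed
  have "ennreal (cst CARD('d) t) * L \<le> emeasure (f s) (fst -` C)"
  proof -
    from M1 M2 M3 have "ennreal (cst CARD('d) t) * L \<le> (\<integral>\<^sup>+ r\<in>{0..s}. ennreal (exp (- (s - r))) *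
               (\<integral>\<^sup>+ z. (\<integral>\<^sup>+ v. ennreal (maxwellian v) *
                   indicator (fst -` C) (flow (s - r) (fst z, v)) \<partial>lborel) \<partial>(f r)) \<partial>lborel)"
      by simp
    also have "\<dots> \<le> emeasure (f s) (fst -` C)"
      unfolding eq by (rule add_increasing) simp_all
    finally show ?thesis .
  qed
  then show ?thesis by (simp add: L_def Q_def n_def)
qed


lemma dom_lb:
  fixes f :: "real \<Rightarrow> ((real^'d) \<times> (real^'d)) measure" and h :: "real^'d \<Rightarrow> ennreal"
  assumes f: "kinetic_solution f" and t: "t > 0" and s: "t / 2 \<le> s" "s \<le> t"
    and h: "h \<in> borel_measurable borel"
  shows "ennreal (cst CARD('d) t) * (\<integral>\<^sup>+u. indicator (cball 0 (real CARD('d) + t)) u * h (wrap u) \<partial>lborel)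
     \<le> (\<integral>\<^sup>+ z. h (fst z) \<partial>(f s))"
proof -
  define Q where "Q = cball (0::real^'d) (real CARD('d) + t)"
  define c where "c = cst CARD('d) t"
  have [measurable]: "Q \<in> sets borel" by (simp add: Q_def borel_closed)
  have s0: "s \<ge> 0" using s t by linarith
  have sets_fs: "sets (f s) = sets borel" by (rule ks_sets[OF f s0])
  have space_fs: "space (f s) = UNIV" using sets_eq_imp_space_eq[OF sets_fs] by simp
  have fstm: "fst \<in> measurable (f s) (borel :: (real^'d) measure)"
    using measurable_fst_borel by (simp add: measurable_cong_sets[OF sets_fs refl])
  define dens where "dens u = ennreal c * indicator Q u" for u :: "real^'d"
  have densm: "dens \<in> borel_measurable lborel" unfolding dens_def[abs_def] by measurable
  define lam where "lam = distr (density lborel dens) (borel :: (real^'d) measure) wrap"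
  define nu where "nu = distr (f s) (borel :: (real^'d) measure) fst"
  have wm: "wrap \<in> measurable (density lborel dens) (borel :: (real^'d) measure)"
    by simp
  have sl: "sets lam = sets borel" "sets nu = sets borel" by (simp_all add: lam_def nu_def)
  have le: "lam \<le> nu"
  proof -
    have sp: "space lam = space nu" by (simp add: lam_def nu_def)
    have "emeasure lam X \<le> emeasure nu X" for X
    proof (cases "X \<in> sets borel")
      case True
      have "emeasure lam X = emeasure (density lborel dens) (wrap -` X \<inter> space (density lborel dens))"
        unfolding lam_def using wm True by (rule emeasure_distr)
      also have "\<dots> = (\<integral>\<^sup>+u. dens u * indicator (wrap -` X) u \<partial>lborel)"
        using densm measurable_sets[OF measurable_wrap True] by (simp add: emeasure_density)
      also have "\<dots> = ennreal c * (\<integral>\<^sup>+u. indicator Q u * indicator X (wrap u) \<partial>lborel)"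
      proof -
        have [measurable]: "(\<lambda>u::real^'d. indicator X (wrap u) :: ennreal) \<in> borel_measurable borel"
          using measurable_compose[OF measurable_wrap borel_measurable_indicator[OF True]]
          by (simp add: o_def)
        have "(\<lambda>u::real^'d. indicator Q u * indicator X (wrap u) :: ennreal) \<in> borel_measurable lborel"
          by measurable
        then show ?thesis
          by (simp add: dens_def nn_integral_cmult[symmetric] mult.assoc indicator_def)
      qed
      also have "\<dots> \<le> emeasure (f s) (fst -` X)"
        unfolding c_def Q_def using cyl_lb[OF f t s True] .
      also have "\<dots> = emeasure nu X"
        unfolding nu_def using emeasure_distr[OF fstm True] space_fs by simp
      finally show ?thesis .
    next
      case False
      then have "X \<notin> sets lam" using sl by simp
      then show ?thesis by (simp add: emeasure_notin_sets)
    qed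
    then show ?thesis using sp sl by (auto simp: le_measure_iff le_fun_def)
  qed
  have "integral\<^sup>N lam h \<le> integral\<^sup>N nu h"
    by (rule nn_integral_mono_measure) (use sl le in simp_all)
  moreover have "integral\<^sup>N lam h = ennreal c * (\<integral>\<^sup>+u. indicator Q u * h (wrap u) \<partial>lborel)"
  proof -
    have hw[measurable]: "(\<lambda>u::real^'d. h (wrap u)) \<in> borel_measurable borel"
      using measurable_compose[OF measurable_wrap h] by (simp add: o_def)
    have "integral\<^sup>N lam h = (\<integral>\<^sup>+u. h (wrap u) \<partial>density lborel dens)"
      unfolding lam_def using wm h by (intro nn_integral_distr) simp_all
    also have "\<dots> = (\<integral>\<^sup>+u. dens u * h (wrap u) \<partial>lborel)"
      using densm hw by (simp add: nn_integral_density)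
    also have "\<dots> = ennreal c * (\<integral>\<^sup>+u. indicator Q u * h (wrap u) \<partial>lborel)"
    proof -
      have "(\<lambda>u::real^'d. indicator Q u * h (wrap u)) \<in> borel_measurable lborel"
        using hw by measurable
      then show ?thesis by (simp add: dens_def nn_integral_cmult[symmetric] mult.assoc)
    qed
    finally show ?thesis .
  qed
  moreover have "integral\<^sup>N nu h = (\<integral>\<^sup>+ z. h (fst z) \<partial>(f s))"
    unfolding nu_def using fstm h by (intro nn_integral_distr) simp_all
  ultimately show ?thesis by (simp add: c_def Q_def)
qed


lemma H_meas:
  fixes A :: "((real^'d) \<times> (real^'d)) set"
  assumes A: "A \<in> sets borel"
  shows "(\<lambda>x::real^'d. \<integral>\<^sup>+v. ennreal (maxwellian v) * indicator A (flow \<tau> (x, v)) \<partial>lborel) \<in> borel_measurable borel"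
proof -
  have s: "(\<lambda>z::(real^'d)\<times>(real^'d). snd z) \<in> borel_measurable borel"
    by (intro borel_measurable_continuous_onI continuous_intros)
  have [measurable]: "(\<lambda>z::(real^'d)\<times>(real^'d). ennreal (maxwellian (snd z))) \<in> borel_measurable borel"
    using measurable_compose[OF s measurable_maxwellian] by (simp add: o_def)
  have [measurable]: "(\<lambda>z::(real^'d)\<times>(real^'d). indicator A (flow \<tau> z) :: ennreal) \<in> borel_measurable borel"
    by (rule measurable_compose[OF measurable_flow[of \<tau>] borel_measurable_indicator[OF A]])
  have "(\<lambda>z::(real^'d)\<times>(real^'d). ennreal (maxwellian (snd z)) * indicator A (flow \<tau> z)) \<in> borel_measurable borel"
    by measurable
  from prod_measurable_lborel[OF this]
  have "case_prod (\<lambda>x v. ennreal (maxwellian v) * indicator A (flow \<tau> (x, v))) \<in> borel_measurable (lborel \<Otimes>\<^sub>M lborel)"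
    by simp
  from lborel.borel_measurable_nn_integral[OF this] show ?thesis by simp
qed

theorem mainTheorem6:
  fixes t\<^sub>s :: real
  assumes "t\<^sub>s > 0"
  shows "\<exists>\<alpha>::real. \<exists>\<delta>::real. \<alpha> > 0 \<and> \<delta> > 0 \<and>
    (\<forall>f :: real \<Rightarrow> ((real^'d) \<times> (real^'d)) measure. kinetic_solution f \<longrightarrow>
       (\<forall>A\<in>sets borel.
          ennreal \<alpha> * emeasure lborel (A \<inter> (torus \<times> cball 0 \<delta>)) \<le> emeasure (f t\<^sub>s) A))"
proof -
  define t where "t = t\<^sub>s"
  have t: "t > 0" using assms by (simp add: t_def)
  define n where "n = CARD('d)"
  define k where "k = exp (- t) * (cst n t * mwb n 1)"
  have kpos: "k > 0" using t by (simp add: k_def cst_pos mwb_pos)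
  define \<alpha> where "\<alpha> = (t / 2) * k"
  have apos: "\<alpha> > 0" using t kpos by (simp add: \<alpha>_def)
  have main: "ennreal \<alpha> * emeasure lborel (A \<inter> (torus \<times> cball 0 1)) \<le> emeasure (f t) A"
    if f: "kinetic_solution f" and A: "A \<in> sets borel"
    for f :: "real \<Rightarrow> ((real^'d) \<times> (real^'d)) measure" and A
  proof -
    define Lb where "Lb = emeasure lborel (A \<inter> (torus \<times> cball (0::real^'d) 1))"
    have "(\<integral>\<^sup>+ s. ennreal k * Lb * indicator {t/2..t} s \<partial>lborel) \<le>
        (\<integral>\<^sup>+ s\<in>{0..t}. ennreal (exp (- (t - s))) *
               (\<integral>\<^sup>+ z. (\<integral>\<^sup>+ v. ennreal (maxwellian v) *
                   indicator A (flow (t - s) (fst z, v)) \<partial>lborel) \<partial>(f s)) \<partial>lborel)"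
    proof (rule nn_integral_mono)
      fix s :: real
      show "ennreal k * Lb * indicator {t/2..t} s \<le> ennreal (exp (- (t - s))) *
               (\<integral>\<^sup>+ z. (\<integral>\<^sup>+ v. ennreal (maxwellian v) *
                   indicator A (flow (t - s) (fst z, v)) \<partial>lborel) \<partial>(f s)) * indicator {0..t} s"
      proof (cases "s \<in> {t/2..t}")
        case False
        then show ?thesis by simp
      next
        case True
        then have s: "t / 2 \<le> s" "s \<le> t" by auto
        have s0: "s \<in> {0..t}" using s t by auto
        define H where "H x = (\<integral>\<^sup>+v. ennreal (maxwellian v) * indicator A (flow (t - s) (x, v)) \<partial>lborel)"
          for x :: "real^'d"
        have Hm: "H \<in> borel_measurable borel" unfolding H_def[abs_def] by (rule H_meas[OF A])
        have F1: "ennreal (mwb n 1) * Lb \<le> (\<integral>\<^sup>+u. indicator (cball 0 (real n + t)) u * H (wrap u) \<partial>lborel)"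
          unfolding Lb_def H_def n_def using final_lb[OF A, of "t - s" t] s by simp
        have F2: "ennreal (cst n t) * (\<integral>\<^sup>+u. indicator (cball 0 (real n + t)) u * H (wrap u) \<partial>lborel)
            \<le> (\<integral>\<^sup>+ z. H (fst z) \<partial>(f s))"
          unfolding n_def by (rule dom_lb[OF f t s Hm])
        have "ennreal (cst n t * mwb n 1) * Lb \<le> (\<integral>\<^sup>+ z. H (fst z) \<partial>(f s))"
        proof -
          have "ennreal (cst n t * mwb n 1) * Lb = ennreal (cst n t) * (ennreal (mwb n 1) * Lb)"
            using cst_pos[OF t, of n] mwb_pos[of n 1] by (simp add: ennreal_mult mult.assoc)
          also have "\<dots> \<le> ennreal (cst n t) * (\<integral>\<^sup>+u. indicator (cball 0 (real n + t)) u * H (wrap u) \<partial>lborel)"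
            using F1 by (rule mult_left_mono) simp
          finally show ?thesis using F2 by simp
        qed
        moreover have "ennreal k \<le> ennreal (exp (- (t - s))) * ennreal (cst n t * mwb n 1)"
        proof -
          have "k \<le> exp (- (t - s)) * (cst n t * mwb n 1)"
            unfolding k_def using s t cst_pos[OF t, of n] mwb_pos[of n 1]
            by (intro mult_right_mono) auto
          then show ?thesis using cst_pos[OF t, of n] mwb_pos[of n 1]
            by (simp add: ennreal_mult[symmetric] ennreal_leI)
        qed
        ultimately have "ennreal k * Lb \<le> ennreal (exp (- (t - s))) * (\<integral>\<^sup>+ z. H (fst z) \<partial>(f s))"
        proof -
          assume a1: "ennreal (cst n t * mwb n 1) * Lb \<le> (\<integral>\<^sup>+ z. H (fst z) \<partial>(f s))"
            and a2: "ennreal k \<le> ennreal (exp (- (t - s))) * ennreal (cst n t * mwb n 1)"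
          have "ennreal k * Lb \<le> ennreal (exp (- (t - s))) * ennreal (cst n t * mwb n 1) * Lb"
            using a2 by (rule mult_right_mono) simp
          also have "\<dots> \<le> ennreal (exp (- (t - s))) * (\<integral>\<^sup>+ z. H (fst z) \<partial>(f s))"
            unfolding mult.assoc using a1 by (rule mult_left_mono) simp
          finally show ?thesis .
        qed
        then show ?thesis using True s0 by (simp add: H_def)
      qed
    qed
    note M1 = this
    have M2: "(\<integral>\<^sup>+ s. ennreal k * Lb * indicator {t/2..t} s \<partial>lborel) = ennreal k * Lb * ennreal (t / 2)"
      using t by (simp add: nn_integral_cmult_indicator)
    have M3: "ennreal k * Lb * ennreal (t / 2) = ennreal \<alpha> * Lb"
    proof -
      have "ennreal k * ennreal (t / 2) = ennreal \<alpha>"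
        using t kpos by (simp add: \<alpha>_def ennreal_mult[symmetric] mult.commute)
      moreover have "ennreal k * Lb * ennreal (t / 2) = (ennreal k * ennreal (t / 2)) * Lb"
        by (simp add: mult_ac)
      ultimately show ?thesis by simp
    qed
    have M4: "(\<integral>\<^sup>+ s\<in>{0..t}. ennreal (exp (- (t - s))) *
               (\<integral>\<^sup>+ z. (\<integral>\<^sup>+ v. ennreal (maxwellian v) *
                   indicator A (flow (t - s) (fst z, v)) \<partial>lborel) \<partial>(f s)) \<partial>lborel) \<le> emeasure (f t) A"
      unfolding ks_eq[OF f less_imp_le[OF t] A] by (rule add_increasing) simp_all
    have "ennreal \<alpha> * Lb \<le> (\<integral>\<^sup>+ s\<in>{0..t}. ennreal (exp (- (t - s))) *
               (\<integral>\<^sup>+ z. (\<integral>\<^sup>+ v. ennreal (maxwellian v) *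
                   indicator A (flow (t - s) (fst z, v)) \<partial>lborel) \<partial>(f s)) \<partial>lborel)"
      using M1 unfolding M2 M3 .
    then have "ennreal \<alpha> * Lb \<le> emeasure (f t) A" using M4 by (rule order_trans)
    then show ?thesis unfolding Lb_def .
  qed
  show ?thesis
  proof (rule exI[of _ \<alpha>], rule exI[of _ "1::real"], intro conjI allI impI ballI)
    show "\<alpha> > 0" by (rule apos)
    show "(1::real) > 0" by simp
    fix f :: "real \<Rightarrow> ((real^'d) \<times> (real^'d)) measure" and A :: "((real^'d) \<times> (real^'d)) set"
    assume "kinetic_solution f" "A \<in> sets borel"
    from main[OF this] show "ennreal \<alpha> * emeasure lborel (A \<inter> (torus \<times> cball 0 1)) \<le> emeasure (f t\<^sub>s) A"
      unfolding t_def .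
  qed
qed

end
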